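(* Let $G=(V,E)$ be a finite graph. (a) Eulerian equivalence $\sim$ is an equivalence relation on the set $\mathcal O(G)$ of orientations. (b) If $\rho,\sigma\in\mathcal O(G)$ are Eulerian equivalent and $\rho$ is totally cyclic, then so is $\sigma$. (c) Let $q$ be a positive integer and $\rho,\sigma\in\mathcal O(G)$ with $\rho\sim\sigma$. Then $Q_{\rho,\sigma}$ restricts to a bijection $q\bar\Delta^+_{\mathrm{FL}}(G,\sigma)\to q\bar\Delta^+_{\mathrm{FL}}(G,\rho)$ sending lattice points to lattice points; in particular $Q_{\rho,\sigma}(q\Delta^+_{\mathrm{FL}}(G,\sigma))=q\Delta^+_{\mathrm{FL}}(G,\rho)$, $\varphi_\rho(G,q)=\varphi_\sigma(G,q)$ and $\bar\varphi_\rho(G,q)=\bar\varphi_\sigma(G,q)$.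
   Context: An orientation assigns each edge (including loops) one of its two directions; $\varepsilon(v,e)=1$ ($-1$) if non-loop $e$ points out of (into) end-vertex $v$, $0$ otherwise. Real flows $F(G,\varepsilon;\mathbb R)$: $f:E\to\mathbb R$ with $\sum_e m_{v,e}f(e)=0$ for all $v$, $m_{v,e}=\varepsilon(v,e)$ for non-loops, $0$ for loops; integer flows $F(G,\varepsilon;\mathbb Z)$ similarly. A digraph is directed Eulerian if in-degree equals out-degree at each vertex (a loop contributing one of each). $\rho\sim\sigma$ (Eulerian equivalent) if the spanning subgraph whose edges are those on which $\rho,\sigma$ differ is directed Eulerian with respect to $\rho$ (equivalently $\sigma$). A cut $[S,S^c]$ (nonempty set of all edges between a nonempty proper vertex set $S$ and its complement) is directed if all its edges point from $S$ to $S^c$ or all from $S^c$ to $S$; an orientation is totally cyclic if it has no directed cut. $Q_{\rho,\sigma}:[0,q]^E\to[0,q]^E$ is $(Q_{\rho,\sigma}g)(e)=g(e)$ if $\rho,\sigma$ give $e$ the same direction and $q-g(e)$ otherwise. $q\Delta^+_{\mathrm{FL}}(G,\rho)=\{f\in F(G,\rho;\mathbb R):0<f(e)<q\ \forall e\}$, $q\bar\Delta^+_{\mathrm{FL}}(G,\rho)=\{f\in F(G,\rho;\mathbb R):0\le f(e)\le q\ \forall e\}$; lattice points are those in $\mathbb Z^E$. $\varphi_\rho(G,q)=\#\{f\in F(G,\rho;\mathbb Z):0<f(e)<q\ \forall e\}$, $\bar\varphi_\rho(G,q)=\#\{f\in F(G,\rho;\mathbb Z):0\le f(e)\le q\ \forall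 e\}$. *)

theory Defs
  imports Complex_Main
begin

text \<open>A finite graph (loops and multiple edges allowed): vertex set V, edge set E,
  and a reference assignment of ends: edge e has ends t0 e and h0 e
  (e is a loop iff t0 e = h0 e).  An orientation is a function rho :: 'e => bool:
  rho e = True means e is directed from t0 e to h0 e, False means the reverse direction.
  For a loop the two directions are distinct orientations.\<close>

definition finite_graph :: "'v set \<Rightarrow> 'e set \<Rightarrow> ('e \<Rightarrow> 'v) \<Rightarrow> ('e \<Rightarrow> 'v) \<Rightarrow> bool" where
  "finite_graph V E t0 h0 \<longleftrightarrow> finite V \<and> finite E \<and> (\<forall>e\<in>E. t0 e \<in> V \<and> h0 e \<in> V)"

definition orientations :: "'e set \<Rightarrow> ('e \<Rightarrow> bool) set" where
  "orientations E = {rho. \<forall>e. e \<notin> E \<longrightarrow> rho e = True}"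

definition tail :: "('e \<Rightarrow> 'v) \<Rightarrow> ('e \<Rightarrow> 'v) \<Rightarrow> ('e \<Rightarrow> bool) \<Rightarrow> 'e \<Rightarrow> 'v" where
  "tail t0 h0 rho e = (if rho e then t0 e else h0 e)"

definition head :: "('e \<Rightarrow> 'v) \<Rightarrow> ('e \<Rightarrow> 'v) \<Rightarrow> ('e \<Rightarrow> bool) \<Rightarrow> 'e \<Rightarrow> 'v" where
  "head t0 h0 rho e = (if rho e then h0 e else t0 e)"

definition eps :: "('e \<Rightarrow> 'v) \<Rightarrow> ('e \<Rightarrow> 'v) \<Rightarrow> ('e \<Rightarrow> bool) \<Rightarrow> 'v \<Rightarrow> 'e \<Rightarrow> int" where
  "eps t0 h0 rho v e =
     (if t0 e = h0 e then 0
      else if tail t0 h0 rho e = v then 1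
      else if head t0 h0 rho e = v then -1 else 0)"

definition real_flows :: "'v set \<Rightarrow> 'e set \<Rightarrow> ('e \<Rightarrow> 'v) \<Rightarrow> ('e \<Rightarrow> 'v) \<Rightarrow> ('e \<Rightarrow> bool) \<Rightarrow> ('e \<Rightarrow> real) set" where
  "real_flows V E t0 h0 rho = {f. (\<forall>e. e \<notin> E \<longrightarrow> f e = 0) \<and>
      (\<forall>v\<in>V. (\<Sum>e\<in>E. of_int (eps t0 h0 rho v e) * f e) = 0)}"

definition int_flows :: "'v set \<Rightarrow> 'e set \<Rightarrow> ('e \<Rightarrow> 'v) \<Rightarrow> ('e \<Rightarrow> 'v) \<Rightarrow> ('e \<Rightarrow> bool) \<Rightarrow> ('e \<Rightarrow> int) set" where
  "int_flows V E t0 h0 rho = {f. (\<forall>e. e \<notin> E \<longrightarrow> f e = 0) \<and>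
      (\<forall>v\<in>V. (\<Sum>e\<in>E. eps t0 h0 rho v e * f e) = 0)}"

text \<open>the spanning subgraph with edge set D is directed Eulerian w.r.t. rho
  (a loop contributes one to in-degree and one to out-degree)\<close>
definition directed_eulerian :: "'v set \<Rightarrow> 'e set \<Rightarrow> ('e \<Rightarrow> 'v) \<Rightarrow> ('e \<Rightarrow> 'v) \<Rightarrow> ('e \<Rightarrow> bool) \<Rightarrow> bool" where
  "directed_eulerian V D t0 h0 rho \<longleftrightarrow>
     (\<forall>v\<in>V. card {e\<in>D. head t0 h0 rho e = v} = card {e\<in>D. tail t0 h0 rho e = v})"

definition diff_edges :: "'e set \<Rightarrow> ('e \<Rightarrow> bool) \<Rightarrow> ('e \<Rightarrow> bool) \<Rightarrow> 'e set" where
  "diff_edges E rho sigma = {e\<in>E. rho e \<noteq> sigma e}"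

definition eulerian_equiv :: "'v set \<Rightarrow> 'e set \<Rightarrow> ('e \<Rightarrow> 'v) \<Rightarrow> ('e \<Rightarrow> 'v) \<Rightarrow> ('e \<Rightarrow> bool) \<Rightarrow> ('e \<Rightarrow> bool) \<Rightarrow> bool" where
  "eulerian_equiv V E t0 h0 rho sigma \<longleftrightarrow> directed_eulerian V (diff_edges E rho sigma) t0 h0 rho"

definition eulerian_rel :: "'v set \<Rightarrow> 'e set \<Rightarrow> ('e \<Rightarrow> 'v) \<Rightarrow> ('e \<Rightarrow> 'v) \<Rightarrow> (('e \<Rightarrow> bool) \<times> ('e \<Rightarrow> bool)) set" where
  "eulerian_rel V E t0 h0 = {(rho, sigma). rho \<in> orientations E \<and> sigma \<in> orientations E \<and>
      eulerian_equiv V E t0 h0 rho sigma}"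

definition cut_edges :: "'v set \<Rightarrow> 'e set \<Rightarrow> ('e \<Rightarrow> 'v) \<Rightarrow> ('e \<Rightarrow> 'v) \<Rightarrow> 'v set \<Rightarrow> 'e set" where
  "cut_edges V E t0 h0 S = {e\<in>E. (t0 e \<in> S \<and> h0 e \<in> V - S) \<or> (h0 e \<in> S \<and> t0 e \<in> V - S)}"

definition is_cut :: "'v set \<Rightarrow> 'e set \<Rightarrow> ('e \<Rightarrow> 'v) \<Rightarrow> ('e \<Rightarrow> 'v) \<Rightarrow> 'v set \<Rightarrow> bool" where
  "is_cut V E t0 h0 S \<longleftrightarrow> S \<noteq> {} \<and> S \<subset> V \<and> cut_edges V E t0 h0 S \<noteq> {}"

definition directed_cut :: "'v set \<Rightarrow> 'e set \<Rightarrow> ('e \<Rightarrow> 'v) \<Rightarrow> ('e \<Rightarrow> 'v) \<Rightarrow> ('e \<Rightarrow> bool) \<Rightarrow> 'v set \<Rightarrow> bool" where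
  "directed_cut V E t0 h0 rho S \<longleftrightarrow> is_cut V E t0 h0 S \<and>
     ((\<forall>e\<in>cut_edges V E t0 h0 S. tail t0 h0 rho e \<in> S \<and> head t0 h0 rho e \<in> V - S) \<or>
      (\<forall>e\<in>cut_edges V E t0 h0 S. tail t0 h0 rho e \<in> V - S \<and> head t0 h0 rho e \<in> S))"

definition totally_cyclic :: "'v set \<Rightarrow> 'e set \<Rightarrow> ('e \<Rightarrow> 'v) \<Rightarrow> ('e \<Rightarrow> 'v) \<Rightarrow> ('e \<Rightarrow> bool) \<Rightarrow> bool" where
  "totally_cyclic V E t0 h0 rho \<longleftrightarrow> (\<nexists>S. directed_cut V E t0 h0 rho S)"

definition Qmap :: "('e \<Rightarrow> bool) \<Rightarrow> ('e \<Rightarrow> bool) \<Rightarrow> real \<Rightarrow> ('e \<Rightarrow> real) \<Rightarrow> ('e \<Rightarrow> real)" where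
  "Qmap rho sigma q g = (\<lambda>e. if rho e = sigma e then g e else q - g e)"

definition open_FL :: "'v set \<Rightarrow> 'e set \<Rightarrow> ('e \<Rightarrow> 'v) \<Rightarrow> ('e \<Rightarrow> 'v) \<Rightarrow> ('e \<Rightarrow> bool) \<Rightarrow> real \<Rightarrow> ('e \<Rightarrow> real) set" where
  "open_FL V E t0 h0 rho q = {f\<in>real_flows V E t0 h0 rho. \<forall>e\<in>E. 0 < f e \<and> f e < q}"

definition closed_FL :: "'v set \<Rightarrow> 'e set \<Rightarrow> ('e \<Rightarrow> 'v) \<Rightarrow> ('e \<Rightarrow> 'v) \<Rightarrow> ('e \<Rightarrow> bool) \<Rightarrow> real \<Rightarrow> ('e \<Rightarrow> real) set" where
  "closed_FL V E t0 h0 rho q = {f\<in>real_flows V E t0 h0 rho. \<forall>e\<in>E. 0 \<le> f e \<and> f e \<le> q}"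

definition lattice_pt :: "('e \<Rightarrow> real) \<Rightarrow> bool" where
  "lattice_pt f \<longleftrightarrow> (\<forall>e. f e \<in> \<int>)"

definition phi :: "'v set \<Rightarrow> 'e set \<Rightarrow> ('e \<Rightarrow> 'v) \<Rightarrow> ('e \<Rightarrow> 'v) \<Rightarrow> ('e \<Rightarrow> bool) \<Rightarrow> nat \<Rightarrow> nat" where
  "phi V E t0 h0 rho q = card {f\<in>int_flows V E t0 h0 rho. \<forall>e\<in>E. 0 < f e \<and> f e < int q}"

definition phibar :: "'v set \<Rightarrow> 'e set \<Rightarrow> ('e \<Rightarrow> 'v) \<Rightarrow> ('e \<Rightarrow> 'v) \<Rightarrow> ('e \<Rightarrow> bool) \<Rightarrow> nat \<Rightarrow> nat" where
  "phibar V E t0 h0 rho q = card {f\<in>int_flows V E t0 h0 rho. \<forall>e\<in>E. 0 \<le> f e \<and> f e \<le> int q}"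

end

theory Submission imports Defs begin

lemma eps_alt: "eps t0 h0 rho v e = (if tail t0 h0 rho e = v then 1 else 0) - (if head t0 h0 rho e = v then 1 else 0)"
  by (auto simp: eps_def tail_def head_def)

lemma eps_flip: "rho e \<noteq> sigma e \<Longrightarrow> eps t0 h0 sigma v e = - eps t0 h0 rho v e"
  by (cases "rho e") (auto simp: eps_def tail_def head_def)

lemma eps_same: "rho e = sigma e \<Longrightarrow> eps t0 h0 sigma v e = eps t0 h0 rho v e"
  by (simp add: eps_def tail_def head_def)

lemma card_filter_sum: "finite D \<Longrightarrow> (\<Sum>e\<in>D. if P e then 1 else 0::int) = int (card {e\<in>D. P e})"
  by (simp add: sum.inter_filter[symmetric])

definition dt :: "('e \<Rightarrow> 'v) \<Rightarrow> ('e \<Rightarrow> 'v) \<Rightarrow> ('e \<Rightarrow> bool) \<Rightarrow> ('e \<Rightarrow> bool) \<Rightarrow> 'v \<Rightarrow> 'e \<Rightarrow> int" where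
  "dt t0 h0 rho sigma v e = (if rho e = sigma e then 0 else eps t0 h0 rho v e)"

lemma eul_equiv_iff:
  assumes "finite E"
  shows "eulerian_equiv V E t0 h0 rho sigma \<longleftrightarrow>
    (\<forall>v\<in>V. (\<Sum>e\<in>E. dt t0 h0 rho sigma v e) = 0)"
proof -
  let ?D = "diff_edges E rho sigma"
  have fin: "finite ?D" using assms by (simp add: diff_edges_def)
  have eq: "(\<Sum>e\<in>E. dt t0 h0 rho sigma v e) =
     int (card {e\<in>?D. tail t0 h0 rho e = v}) - int (card {e\<in>?D. head t0 h0 rho e = v})" for v
  proof -
    have "(\<Sum>e\<in>E. dt t0 h0 rho sigma v e) = (\<Sum>e\<in>E. if rho e \<noteq> sigma e then eps t0 h0 rho v e else 0)"
      by (rule sum.cong) (auto simp: dt_def)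
    also have "\<dots> = (\<Sum>e\<in>?D. eps t0 h0 rho v e)"
      using assms unfolding diff_edges_def by (simp only: sum.inter_filter)
    also have "\<dots> = int (card {e\<in>?D. tail t0 h0 rho e = v}) - int (card {e\<in>?D. head t0 h0 rho e = v})"
      by (simp add: eps_alt sum_subtractf card_filter_sum fin)
    finally show ?thesis .
  qed
  show ?thesis unfolding eulerian_equiv_def directed_eulerian_def eq by auto
qed

lemma pt_sym: "dt t0 h0 sigma rho v e = - dt t0 h0 rho sigma v e"
  unfolding dt_def by (cases "rho e"; cases "sigma e") (simp_all add: eps_def tail_def head_def)

lemma pt_trans: "dt t0 h0 rho tau v e = dt t0 h0 rho sigma v e + dt t0 h0 sigma tau v e"
  unfolding dt_def by (cases "rho e"; cases "sigma e"; cases "tau e") (simp_all add: eps_def tail_def head_def)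

lemma eul_sym: "finite E \<Longrightarrow> eulerian_equiv V E t0 h0 rho sigma \<Longrightarrow> eulerian_equiv V E t0 h0 sigma rho"
proof -
  assume f: "finite E" and h: "eulerian_equiv V E t0 h0 rho sigma"
  have "\<And>v. (\<Sum>e\<in>E. dt t0 h0 sigma rho v e) = - (\<Sum>e\<in>E. dt t0 h0 rho sigma v e)"
    by (subst pt_sym) (simp add: sum_negf)
  thus ?thesis using h f by (simp add: eul_equiv_iff)
qed

lemma eul_trans: "finite E \<Longrightarrow> eulerian_equiv V E t0 h0 rho sigma \<Longrightarrow> eulerian_equiv V E t0 h0 sigma tau
   \<Longrightarrow> eulerian_equiv V E t0 h0 rho tau"
  by (simp add: eul_equiv_iff pt_trans[of t0 h0 rho tau _ _ sigma] sum.distrib)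

lemma eul_refl: "finite E \<Longrightarrow> eulerian_equiv V E t0 h0 rho rho"
  by (simp add: eul_equiv_iff dt_def)

lemma part_a: "finite E \<Longrightarrow> equiv (orientations E) (eulerian_rel V E t0 h0)"
proof (rule equivI)
  assume f: "finite E"
  show "eulerian_rel V E t0 h0 \<subseteq> orientations E \<times> orientations E"
    unfolding eulerian_rel_def by auto
  show "refl_on (orientations E) (eulerian_rel V E t0 h0)"
    unfolding refl_on_def eulerian_rel_def using eul_refl[OF f] by auto
  show "sym (eulerian_rel V E t0 h0)"
    unfolding sym_def eulerian_rel_def using eul_sym[OF f] by auto
  show "trans (eulerian_rel V E t0 h0)"
  proof (rule transI)
    fix x y z assume "(x, y) \<in> eulerian_rel V E t0 h0" "(y, z) \<in> eulerian_rel V E t0 h0"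
    thus "(x, z) \<in> eulerian_rel V E t0 h0"
      unfolding eulerian_rel_def using eul_trans[OF f, of V t0 h0 x y z] by simp
  qed
qed


lemma cut_sum:
  assumes G: "finite_graph V E t0 h0" and eq: "eulerian_equiv V E t0 h0 rho sigma" and S: "S \<subseteq> V"
  shows "(\<Sum>e\<in>E. if rho e = sigma e then 0 else
            (if tail t0 h0 rho e \<in> S then 1 else 0) - (if head t0 h0 rho e \<in> S then 1 else 0::int)) = 0"
proof -
  have fE: "finite E" and fV: "finite V" using G by (auto simp: finite_graph_def)
  have fS: "finite S" using S fV finite_subset by blast
  have z: "\<forall>v\<in>V. (\<Sum>e\<in>E. dt t0 h0 rho sigma v e) = 0" using eq fE by (simp add: eul_equiv_iff)
  have "0 = (\<Sum>v\<in>S. \<Sum>e\<in>E. dt t0 h0 rho sigma v e)" using z S by (simp add: subset_iff)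
  also have "\<dots> = (\<Sum>e\<in>E. \<Sum>v\<in>S. dt t0 h0 rho sigma v e)" by (rule sum.swap)
  also have "\<dots> = (\<Sum>e\<in>E. if rho e = sigma e then 0 else
            (if tail t0 h0 rho e \<in> S then 1 else 0) - (if head t0 h0 rho e \<in> S then 1 else 0::int))"
    by (rule sum.cong) (auto simp: dt_def eps_alt sum_subtractf fS)
  finally show ?thesis by simp
qed

lemma key_cut:
  assumes G: "finite_graph V E t0 h0" and eq: "eulerian_equiv V E t0 h0 rho sigma"
    and dc: "directed_cut V E t0 h0 sigma S"
  shows "\<forall>e\<in>cut_edges V E t0 h0 S. rho e = sigma e"
proof -
  define t where "t e = (if rho e = sigma e then 0 else
            (if tail t0 h0 rho e \<in> S then 1 else 0) - (if head t0 h0 rho e \<in> S then 1 else 0::int))" for e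
  have fE: "finite E" using G by (auto simp: finite_graph_def)
  have SV: "S \<subseteq> V" using dc by (auto simp: directed_cut_def is_cut_def)
  have s0: "(\<Sum>e\<in>E. t e) = 0" using cut_sum[OF G eq SV] by (simp add: t_def)
  have nc: "t e = 0" if "e \<in> E" "e \<notin> cut_edges V E t0 h0 S" for e
  proof -
    have "t0 e \<in> V" "h0 e \<in> V" using G that by (auto simp: finite_graph_def)
    hence "t0 e \<in> S \<longleftrightarrow> h0 e \<in> S" using that by (auto simp: cut_edges_def)
    thus ?thesis by (auto simp: t_def tail_def head_def)
  qed
  from dc consider
     (out) "\<forall>e\<in>cut_edges V E t0 h0 S. tail t0 h0 sigma e \<in> S \<and> head t0 h0 sigma e \<in> V - S"
   | (into) "\<forall>e\<in>cut_edges V E t0 h0 S. tail t0 h0 sigma e \<in> V - S \<and> head t0 h0 sigma e \<in> S"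
    unfolding directed_cut_def by blast
  then show ?thesis
  proof cases
    case out
    have c: "t e = (if rho e = sigma e then 0 else -1)" if "e \<in> cut_edges V E t0 h0 S" for e
      using out that by (cases "rho e"; cases "sigma e") (auto simp: t_def tail_def head_def)
    have np: "\<forall>e\<in>E. 0 \<le> - t e"
    proof
      fix e assume "e \<in> E"
      show "0 \<le> - t e"
        using nc[OF \<open>e \<in> E\<close>] c[of e] by (cases "e \<in> cut_edges V E t0 h0 S") auto
    qed
    have "(\<Sum>e\<in>E. - t e) = 0" using s0 by (simp add: sum_negf)
    hence z: "\<forall>e\<in>E. - t e = 0" using sum_nonneg_eq_0_iff[OF fE, of "\<lambda>e. - t e"] np by simp
    show ?thesis
    proof
      fix e assume e: "e \<in> cut_edges V E t0 h0 S"
      hence "e \<in> E" by (simp add: cut_edges_def)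
      thus "rho e = sigma e" using z c[OF e] by (cases "rho e = sigma e") auto
    qed
  next
    case into
    have c: "t e = (if rho e = sigma e then 0 else 1)" if "e \<in> cut_edges V E t0 h0 S" for e
      using into that by (cases "rho e"; cases "sigma e") (auto simp: t_def tail_def head_def)
    have np: "\<forall>e\<in>E. 0 \<le> t e"
    proof
      fix e assume "e \<in> E"
      show "0 \<le> t e"
        using nc[OF \<open>e \<in> E\<close>] c[of e] by (cases "e \<in> cut_edges V E t0 h0 S") auto
    qed
    hence z: "\<forall>e\<in>E. t e = 0" using sum_nonneg_eq_0_iff[OF fE, of t] s0 by simp
    show ?thesis
    proof
      fix e assume e: "e \<in> cut_edges V E t0 h0 S"
      hence "e \<in> E" by (simp add: cut_edges_def)
      thus "rho e = sigma e" using z c[OF e] by (cases "rho e = sigma e") auto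
    qed
  qed
qed

lemma part_b:
  assumes G: "finite_graph V E t0 h0" and eq: "eulerian_equiv V E t0 h0 rho sigma"
    and tc: "totally_cyclic V E t0 h0 rho"
  shows "totally_cyclic V E t0 h0 sigma"
  unfolding totally_cyclic_def
proof
  assume "\<exists>S. directed_cut V E t0 h0 sigma S"
  then obtain S where dc: "directed_cut V E t0 h0 sigma S" by blast
  have same: "\<forall>e\<in>cut_edges V E t0 h0 S. rho e = sigma e" by (rule key_cut[OF G eq dc])
  have "directed_cut V E t0 h0 rho S"
    using dc same unfolding directed_cut_def tail_def head_def by auto
  thus False using tc by (auto simp: totally_cyclic_def)
qed


definition gflows :: "'v set \<Rightarrow> 'e set \<Rightarrow> ('e \<Rightarrow> 'v) \<Rightarrow> ('e \<Rightarrow> 'v) \<Rightarrow> ('e \<Rightarrow> bool) \<Rightarrow> ('e \<Rightarrow> 'a::comm_ring_1) set" where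
  "gflows V E t0 h0 rho = {f. (\<forall>e. e \<notin> E \<longrightarrow> f e = 0) \<and>
      (\<forall>v\<in>V. (\<Sum>e\<in>E. of_int (eps t0 h0 rho v e) * f e) = 0)}"

definition gQ :: "('e \<Rightarrow> bool) \<Rightarrow> ('e \<Rightarrow> bool) \<Rightarrow> 'a::comm_ring_1 \<Rightarrow> ('e \<Rightarrow> 'a) \<Rightarrow> ('e \<Rightarrow> 'a)" where
  "gQ rho sigma c g = (\<lambda>e. if rho e = sigma e then g e else c - g e)"

lemma real_flows_g: "real_flows V E t0 h0 rho = gflows V E t0 h0 rho"
  by (simp add: real_flows_def gflows_def)
lemma int_flows_g: "int_flows V E t0 h0 rho = gflows V E t0 h0 rho"
  by (simp add: int_flows_def gflows_def)
lemma Qmap_g: "Qmap rho sigma c = gQ rho sigma c"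
  by (simp add: Qmap_def gQ_def fun_eq_iff)

lemma gQ_sym: "gQ rho sigma = gQ sigma rho"
  by (auto simp: gQ_def fun_eq_iff)
lemma gQ_inv: "gQ rho sigma c (gQ rho sigma c f) = f"
  by (auto simp: gQ_def fun_eq_iff)

lemma gflow_Q:
  assumes G: "finite_graph V E t0 h0" and eq: "eulerian_equiv V E t0 h0 rho sigma"
    and or: "rho \<in> orientations E" "sigma \<in> orientations E"
    and f: "f \<in> gflows V E t0 h0 sigma"
  shows "gQ rho sigma c f \<in> gflows V E t0 h0 rho"
proof -
  have fE: "finite E" using G by (auto simp: finite_graph_def)
  have z: "\<forall>v\<in>V. (\<Sum>e\<in>E. dt t0 h0 rho sigma v e) = 0" using eq fE by (simp add: eul_equiv_iff)
  have out: "\<forall>e. e \<notin> E \<longrightarrow> gQ rho sigma c f e = 0"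
  proof (intro allI impI)
    fix e assume "e \<notin> E"
    hence r: "rho e = True" "sigma e = True" using or unfolding orientations_def by blast+
    have "f e = 0" using f \<open>e \<notin> E\<close> unfolding gflows_def by blast
    thus "gQ rho sigma c f e = 0" unfolding gQ_def r by simp
  qed
  have "(\<Sum>e\<in>E. of_int (eps t0 h0 rho v e) * gQ rho sigma c f e) = 0" if v: "v \<in> V" for v
  proof -
    have "(\<Sum>e\<in>E. of_int (eps t0 h0 rho v e) * gQ rho sigma c f e) =
        (\<Sum>e\<in>E. of_int (eps t0 h0 sigma v e) * f e + c * of_int (dt t0 h0 rho sigma v e))"
    proof (rule sum.cong)
      fix e assume "e \<in> E"
      show "of_int (eps t0 h0 rho v e) * gQ rho sigma c f e =
         of_int (eps t0 h0 sigma v e) * f e + c * of_int (dt t0 h0 rho sigma v e)"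
      proof (cases "rho e = sigma e")
        case True thus ?thesis by (simp add: gQ_def dt_def eps_same[of rho e sigma, OF True])
      next
        case False thus ?thesis by (simp add: gQ_def dt_def eps_flip[of rho e sigma, OF False] algebra_simps)
      qed
    qed simp
    also have "\<dots> = (\<Sum>e\<in>E. of_int (eps t0 h0 sigma v e) * f e) + c * of_int (\<Sum>e\<in>E. dt t0 h0 rho sigma v e)"
      by (simp add: sum.distrib sum_distrib_left)
    also have "\<dots> = 0" using f v z by (simp add: gflows_def)
    finally show ?thesis .
  qed
  thus ?thesis using out by (simp add: gflows_def)
qed


lemma inv_bij: "(\<And>x. F (F x) = x) \<Longrightarrow> F ` A \<subseteq> B \<Longrightarrow> F ` B \<subseteq> A \<Longrightarrow> bij_betw F A B"
  by (rule bij_betw_byWitness[where f'=F]) auto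

lemma inv_img: "(\<And>x. F (F x) = x) \<Longrightarrow> F ` A \<subseteq> B \<Longrightarrow> F ` B \<subseteq> A \<Longrightarrow> F ` A = B"
  using inv_bij bij_betw_imp_surj_on by metis

context
  fixes V :: "'v set" and E :: "'e set" and t0 h0 :: "'e \<Rightarrow> 'v" and rho sigma :: "'e \<Rightarrow> bool" and q :: nat
  assumes G: "finite_graph V E t0 h0" and eq: "eulerian_equiv V E t0 h0 rho sigma"
    and or: "rho \<in> orientations E" "sigma \<in> orientations E"
begin

lemma closed_map: "Qmap rho sigma (real q) ` closed_FL V E t0 h0 sigma (real q) \<subseteq> closed_FL V E t0 h0 rho (real q)"
  using gflow_Q[OF G eq or] by (force simp: closed_FL_def real_flows_g Qmap_g gQ_def)

lemma open_map: "Qmap rho sigma (real q) ` open_FL V E t0 h0 sigma (real q) \<subseteq> open_FL V E t0 h0 rho (real q)"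
  using gflow_Q[OF G eq or] by (force simp: open_FL_def real_flows_g Qmap_g gQ_def)

lemma phi_map: "gQ rho sigma (int q) ` {f\<in>int_flows V E t0 h0 sigma. \<forall>e\<in>E. 0 < f e \<and> f e < int q}
   \<subseteq> {f\<in>int_flows V E t0 h0 rho. \<forall>e\<in>E. 0 < f e \<and> f e < int q}"
  using gflow_Q[OF G eq or] by (force simp: int_flows_g gQ_def)

lemma phibar_map: "gQ rho sigma (int q) ` {f\<in>int_flows V E t0 h0 sigma. \<forall>e\<in>E. 0 \<le> f e \<and> f e \<le> int q}
   \<subseteq> {f\<in>int_flows V E t0 h0 rho. \<forall>e\<in>E. 0 \<le> f e \<and> f e \<le> int q}"
  using gflow_Q[OF G eq or] by (force simp: int_flows_g gQ_def)

end

theorem lemma5p1: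
  fixes V :: "'v set" and E :: "'e set" and t0 h0 :: "'e \<Rightarrow> 'v"
  assumes G: "finite_graph V E t0 h0"
  shows "equiv (orientations E) (eulerian_rel V E t0 h0)
    \<and> (\<forall>rho\<in>orientations E. \<forall>sigma\<in>orientations E.
           eulerian_equiv V E t0 h0 rho sigma \<longrightarrow> totally_cyclic V E t0 h0 rho \<longrightarrow>
           totally_cyclic V E t0 h0 sigma)
    \<and> (\<forall>(q::nat) rho sigma. 0 < q \<longrightarrow> rho \<in> orientations E \<longrightarrow> sigma \<in> orientations E \<longrightarrow>
           eulerian_equiv V E t0 h0 rho sigma \<longrightarrow>
           bij_betw (Qmap rho sigma (real q)) (closed_FL V E t0 h0 sigma (real q))
                    (closed_FL V E t0 h0 rho (real q))
         \<and> (\<forall>f\<in>closed_FL V E t0 h0 sigma (real q). lattice_pt f \<longrightarrow> lattice_pt (Qmap rho sigma (real q) f))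
         \<and> Qmap rho sigma (real q) ` open_FL V E t0 h0 sigma (real q) = open_FL V E t0 h0 rho (real q)
         \<and> phi V E t0 h0 rho q = phi V E t0 h0 sigma q
         \<and> phibar V E t0 h0 rho q = phibar V E t0 h0 sigma q)"
proof (intro conjI ballI allI impI)
  have fE: "finite E" using G by (simp add: finite_graph_def)
  show "equiv (orientations E) (eulerian_rel V E t0 h0)" using part_a[OF fE] .
  fix rho sigma assume "rho \<in> orientations E" "sigma \<in> orientations E"
    "eulerian_equiv V E t0 h0 rho sigma" "totally_cyclic V E t0 h0 rho"
  thus "totally_cyclic V E t0 h0 sigma" using part_b[OF G] by blast
next
  have fE: "finite E" using G by (simp add: finite_graph_def)
  fix q :: nat and rho sigma
  assume q: "0 < q" and or: "rho \<in> orientations E" "sigma \<in> orientations E"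
    and eq: "eulerian_equiv V E t0 h0 rho sigma"
  have eq': "eulerian_equiv V E t0 h0 sigma rho" using eul_sym[OF fE eq] .
  have inv: "\<And>x. Qmap rho sigma c (Qmap rho sigma c x) = x" for c
    by (simp add: Qmap_g gQ_inv)
  have Qsym: "Qmap sigma rho = Qmap rho sigma" by (simp add: Qmap_g gQ_sym fun_eq_iff)
  have isym: "gQ sigma rho (int q) = gQ rho sigma (int q)" by (simp add: gQ_sym)
  show "bij_betw (Qmap rho sigma (real q)) (closed_FL V E t0 h0 sigma (real q)) (closed_FL V E t0 h0 rho (real q))"
    using inv_bij[OF inv closed_map[OF G eq or] closed_map[OF G eq' or(2,1), unfolded Qsym]] .
  show "Qmap rho sigma (real q) ` open_FL V E t0 h0 sigma (real q) = open_FL V E t0 h0 rho (real q)"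
    using inv_img[OF inv open_map[OF G eq or] open_map[OF G eq' or(2,1), unfolded Qsym]] .
  show "lattice_pt (Qmap rho sigma (real q) f)"
    if "f \<in> closed_FL V E t0 h0 sigma (real q)" "lattice_pt f" for f
    using that(2) by (auto simp: lattice_pt_def Qmap_def)
  show "phi V E t0 h0 rho q = phi V E t0 h0 sigma q"
    unfolding phi_def
    by (rule HOL.sym, rule bij_betw_same_card,
        rule inv_bij[OF gQ_inv phi_map[OF G eq or, where q=q] phi_map[OF G eq' or(2,1), where q=q, unfolded isym]])
  show "phibar V E t0 h0 rho q = phibar V E t0 h0 sigma q"
    unfolding phibar_def
    by (rule HOL.sym, rule bij_betw_same_card,
        rule inv_bij[OF gQ_inv phibar_map[OF G eq or, where q=q] phibar_map[OF G eq' or(2,1), where q=q, unfolded isym]])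
qed

end
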